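(* Let $k$ be an algebraically closed field of characteristic $0$ and $R$ a finitely generated $k$-algebra which is an $n$-Cayley–Hamilton algebra whose trace takes values in $k$. If the Jacobson radical $J$ of $R$ satisfies $R/J\cong M_n(k)$, then $J=0$.
   Context: An algebra with trace over a commutative ring $A$ is an associative unital $A$-algebra $R$ with an $A$-linear map $t:R\to R$ such that $t(a)b=bt(a)$, $t(ab)=t(ba)$ and $t(t(a)b)=t(a)t(b)$. The formal $n$-characteristic polynomial of $a$ is $\chi^n_a(x)=x^n+\sum_{i=1}^nP_i(t(a),\dots,t(a^i))x^{n-i}$ with $P_i$ the universal rational polynomials expressing elementary symmetric functions via power sums. $R$ is an $n$-Cayley–Hamilton algebra if $t(1)=n$ and $\chi^n_a(a)=0$ for all $a\in R$. *)

theory Defs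
  imports Main "HOL-Computational_Algebra.Polynomial" "Jordan_Normal_Form.Matrix"
begin

definition alg_closed :: "'k::field itself \<Rightarrow> bool" where
  "alg_closed _ \<longleftrightarrow> (\<forall>p :: 'k poly. degree p \<ge> 1 \<longrightarrow> (\<exists>x. poly p x = 0))"

text \<open>A unital associative k-algebra structure on the ring 'r: a ring homomorphism
  from k into the centre of 'r; scalar multiplication is c . r = phi c * r.\<close>
definition k_algebra :: "('k::field \<Rightarrow> 'r::ring_1) \<Rightarrow> bool" where
  "k_algebra \<phi> \<longleftrightarrow> \<phi> 1 = 1 \<and> (\<forall>a b. \<phi> (a + b) = \<phi> a + \<phi> b)
     \<and> (\<forall>a b. \<phi> (a * b) = \<phi> a * \<phi> b) \<and> (\<forall>a r. \<phi> a * r = r * \<phi> a)"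

inductive_set gen_subalg :: "('k::field \<Rightarrow> 'r::ring_1) \<Rightarrow> 'r set \<Rightarrow> 'r set"
  for \<phi> S where
  scal: "\<phi> c \<in> gen_subalg \<phi> S"
| gen: "s \<in> S \<Longrightarrow> s \<in> gen_subalg \<phi> S"
| add: "x \<in> gen_subalg \<phi> S \<Longrightarrow> y \<in> gen_subalg \<phi> S \<Longrightarrow> x + y \<in> gen_subalg \<phi> S"
| mult: "x \<in> gen_subalg \<phi> S \<Longrightarrow> y \<in> gen_subalg \<phi> S \<Longrightarrow> x * y \<in> gen_subalg \<phi> S"

definition finitely_generated :: "('k::field \<Rightarrow> 'r::ring_1) \<Rightarrow> bool" where
  "finitely_generated \<phi> \<longleftrightarrow> (\<exists>S. finite S \<and> gen_subalg \<phi> S = UNIV)"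

text \<open>Algebra with trace whose trace takes values in k: t = phi o tr with tr : R -> k.\<close>
definition algebra_with_trace :: "('k::field \<Rightarrow> 'r::ring_1) \<Rightarrow> ('r \<Rightarrow> 'k) \<Rightarrow> bool" where
  "algebra_with_trace \<phi> tr \<longleftrightarrow>
     (\<forall>x y. tr (x + y) = tr x + tr y) \<and> (\<forall>c x. tr (\<phi> c * x) = c * tr x)
     \<and> (\<forall>a b. \<phi> (tr a) * b = b * \<phi> (tr a))
     \<and> (\<forall>a b. tr (a * b) = tr (b * a))
     \<and> (\<forall>a b. tr (\<phi> (tr a) * b) = tr a * tr b)"

text \<open>Elementary symmetric functions expressed in power sums p 1, p 2, ... via Newton's
  identities: i e_i = sum_{j=1..i} (-1)^(j-1) e_(i-j) p_j.\<close>
fun newton_e :: "(nat \<Rightarrow> 'k::field_char_0) \<Rightarrow> nat \<Rightarrow> 'k" where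
  "newton_e p 0 = 1"
| "newton_e p (Suc i) =
     (\<Sum>j\<in>{1..Suc i}. (-1) ^ (j - 1) * newton_e p (Suc i - j) * p j) / of_nat (Suc i)"

definition char_poly_eval :: "('k::field_char_0 \<Rightarrow> 'r::ring_1) \<Rightarrow> ('r \<Rightarrow> 'k) \<Rightarrow> nat \<Rightarrow> 'r \<Rightarrow> 'r" where
  "char_poly_eval \<phi> tr n a = a ^ n +
     (\<Sum>i\<in>{1..n}. \<phi> ((-1) ^ i * newton_e (\<lambda>j. tr (a ^ j)) i) * a ^ (n - i))"

definition cayley_hamilton :: "('k::field_char_0 \<Rightarrow> 'r::ring_1) \<Rightarrow> ('r \<Rightarrow> 'k) \<Rightarrow> nat \<Rightarrow> bool" where
  "cayley_hamilton \<phi> tr n \<longleftrightarrow> algebra_with_trace \<phi> tr \<and> \<phi> (tr 1) = of_nat n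
     \<and> (\<forall>a. char_poly_eval \<phi> tr n a = 0)"

definition left_ideal :: "'r::ring_1 set \<Rightarrow> bool" where
  "left_ideal I \<longleftrightarrow> 0 \<in> I \<and> (\<forall>x\<in>I. \<forall>y\<in>I. x + y \<in> I) \<and> (\<forall>x\<in>I. - x \<in> I)
     \<and> (\<forall>r. \<forall>x\<in>I. r * x \<in> I)"

definition maximal_left_ideal :: "'r::ring_1 set \<Rightarrow> bool" where
  "maximal_left_ideal I \<longleftrightarrow> left_ideal I \<and> I \<noteq> UNIV
     \<and> (\<forall>L. left_ideal L \<and> I \<subseteq> L \<and> L \<noteq> UNIV \<longrightarrow> L = I)"

definition jacobson_radical :: "'r::ring_1 itself \<Rightarrow> 'r set" where
  "jacobson_radical _ = \<Inter> {I. maximal_left_ideal I}"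

text \<open>R/J isomorphic to M_n(k) as k-algebras: a surjective k-algebra homomorphism
  R -> M_n(k) with kernel J.\<close>
definition quotient_iso_Mn :: "('k::field \<Rightarrow> 'r::ring_1) \<Rightarrow> nat \<Rightarrow> 'r set \<Rightarrow> bool" where
  "quotient_iso_Mn \<phi> n J \<longleftrightarrow> (\<exists>f :: 'r \<Rightarrow> 'k mat.
     (\<forall>x. f x \<in> carrier_mat n n)
     \<and> (\<forall>x y. f (x + y) = f x + f y)
     \<and> (\<forall>x y. f (x * y) = f x * f y)
     \<and> f 1 = 1\<^sub>m n
     \<and> (\<forall>c. f (\<phi> c) = c \<cdot>\<^sub>m 1\<^sub>m n)
     \<and> f ` UNIV = carrier_mat n n
     \<and> {x. f x = 0\<^sub>m n n} = J)"

end

theory Submission imports Defs begin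

definition ev :: "('k::field \<Rightarrow> 'r::ring_1) \<Rightarrow> 'k poly \<Rightarrow> 'r \<Rightarrow> 'r" where
  "ev \<phi> p r = (\<Sum>m\<le>degree p. \<phi> (coeff p m) * r ^ m)"

locale kalg =
  fixes \<phi> :: "'k::field_char_0 \<Rightarrow> 'r::ring_1"
  assumes ka: "k_algebra \<phi>"
begin

lemma phi1: "\<phi> 1 = 1" and phi_add: "\<phi> (a + b) = \<phi> a + \<phi> b"
  and phi_mult: "\<phi> (a * b) = \<phi> a * \<phi> b" and phi_c: "\<phi> a * r = r * \<phi> a"
  using ka unfolding k_algebra_def by blast+

lemma phi0[simp]: "\<phi> 0 = 0"
  using phi_add[of 0 0] by simp

lemma phi_minus: "\<phi> (- a) = - \<phi> a"
  using phi_add[of a "-a"] by (simp add: minus_unique)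

lemma phi_diff: "\<phi> (a - b) = \<phi> a - \<phi> b"
  using phi_add[of a "-b"] phi_minus[of b] by simp

lemma phi_inv: "c \<noteq> 0 \<Longrightarrow> \<phi> (inverse c) * \<phi> c = 1"
  using phi_mult[of "inverse c" c] phi1 by simp

lemma phi_cancel: "c \<noteq> 0 \<Longrightarrow> \<phi> c * z = 0 \<Longrightarrow> z = 0"
  by (metis mult.assoc mult_1 mult_zero_right phi_inv)

lemma ev_bound: "degree p \<le> N \<Longrightarrow> ev \<phi> p r = (\<Sum>m\<le>N. \<phi> (coeff p m) * r ^ m)"
  unfolding ev_def
  by (rule sum.mono_neutral_left) (auto simp: coeff_eq_0)

lemma ev_0[simp]: "ev \<phi> 0 r = 0"
  by (simp add: ev_def)

lemma ev_add: "ev \<phi> (p + q) r = ev \<phi> p r + ev \<phi> q r"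
proof -
  let ?N = "max (degree p) (degree q)"
  have "ev \<phi> (p + q) r = (\<Sum>m\<le>?N. \<phi> (coeff (p+q) m) * r ^ m)"
    by (rule ev_bound) (simp add: degree_add_le)
  also have "\<dots> = (\<Sum>m\<le>?N. \<phi> (coeff p m) * r ^ m) + (\<Sum>m\<le>?N. \<phi> (coeff q m) * r ^ m)"
    by (simp add: phi_add distrib_right sum.distrib)
  also have "\<dots> = ev \<phi> p r + ev \<phi> q r"
    using ev_bound[of p ?N r] ev_bound[of q ?N r] by simp
  finally show ?thesis .
qed

lemma ev_smult: "ev \<phi> (Polynomial.smult c p) r = \<phi> c * ev \<phi> p r"
proof -
  have "ev \<phi> (Polynomial.smult c p) r = (\<Sum>m\<le>degree p. \<phi> (coeff (Polynomial.smult c p) m) * r ^ m)"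
    by (rule ev_bound) (simp add: degree_smult_le)
  also have "\<dots> = \<phi> c * ev \<phi> p r"
    by (simp add: ev_def sum_distrib_left phi_mult mult.assoc)
  finally show ?thesis .
qed

lemma ev_pCons: "ev \<phi> (pCons a p) r = \<phi> a + r * ev \<phi> p r"
proof -
  have "ev \<phi> (pCons a p) r = (\<Sum>m\<le>Suc (degree p). \<phi> (coeff (pCons a p) m) * r ^ m)"
    by (rule ev_bound) simp
  also have "\<dots> = \<phi> a + (\<Sum>m\<le>degree p. \<phi> (coeff p m) * r ^ Suc m)"
    by (subst sum.atMost_Suc_shift) simp
  also have "(\<Sum>m\<le>degree p. \<phi> (coeff p m) * r ^ Suc m) = r * ev \<phi> p r"
    unfolding ev_def sum_distrib_left
    by (rule sum.cong) (auto simp: phi_c mult.assoc)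
  finally show ?thesis .
qed

lemma ev_mult: "ev \<phi> (p * q) r = ev \<phi> p r * ev \<phi> q r"
proof (induction p)
  case 0 then show ?case by simp
next
  case (pCons a p)
  show ?case
    by (simp add: ev_add ev_smult ev_pCons pCons.IH distrib_right mult.assoc)
qed

lemma ev_const: "ev \<phi> [:c:] r = \<phi> c"
  by (simp add: ev_pCons)

lemma ev_1[simp]: "ev \<phi> 1 r = 1"
  by (simp add: one_pCons ev_const phi1 del: pCons_one)

lemma ev_lin: "ev \<phi> [:-c, 1:] r = r - \<phi> c"
  by (simp add: ev_pCons phi1 phi_minus)

lemma ev_sum: "ev \<phi> (\<Sum>i\<in>A. p i) r = (\<Sum>i\<in>A. ev \<phi> (p i) r)"
  by (induction A rule: infinite_finite_induct) (auto simp: ev_add)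

lemma ev_monom: "ev \<phi> (monom c m) r = \<phi> c * r ^ m"
proof -
  have "ev \<phi> (monom c m) r = (\<Sum>j\<le>m. \<phi> (coeff (monom c m) j) * r ^ j)"
    by (rule ev_bound) (simp add: degree_monom_le)
  also have "\<dots> = (\<Sum>j\<le>m. if j = m then \<phi> c * r ^ m else 0)"
    by (rule sum.cong) (auto simp: coeff_monom)
  finally show ?thesis by simp
qed

lemma ev_commute: "x * r = r * x \<Longrightarrow> x * ev \<phi> p r = ev \<phi> p r * x"
proof (induction p)
  case 0 then show ?case by simp
next
  case (pCons a p)
  have "x * (r * ev \<phi> p r) = r * ev \<phi> p r * x"
    by (metis mult.assoc pCons.IH pCons.prems)
  then show ?case
    by (simp add: ev_pCons distrib_left distrib_right phi_c)
qed

lemma ev_eigen: "y * z = \<phi> a * z \<Longrightarrow> ev \<phi> p y * z = \<phi> (poly p a) * z"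
proof (induction p)
  case 0 then show ?case by simp
next
  case (pCons c p)
  have "y * ev \<phi> p y * z = \<phi> (a * poly p a) * z"
    by (metis mult.assoc pCons.IH pCons.prems phi_c phi_mult)
  then show ?case
    by (simp add: ev_pCons distrib_right phi_add)
qed

end
definition dg :: "nat \<Rightarrow> (nat \<Rightarrow> 'a::field) \<Rightarrow> 'a mat" where
  "dg n g = mat n n (\<lambda>(i,j). if i = j then g i else 0)"

definition em :: "nat \<Rightarrow> nat \<Rightarrow> nat \<Rightarrow> 'a::field mat" where
  "em n i j = mat n n (\<lambda>(a,b). if a = i \<and> b = j then 1 else 0)"

lemma dg_car[simp]: "dg n g \<in> carrier_mat n n"
  by (simp add: dg_def)

lemma em_car[simp]: "em n i j \<in> carrier_mat n n"
  by (simp add: em_def)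

lemma dg_add: "dg n g + dg n h = dg n (\<lambda>i. g i + h i)"
  by (rule eq_matI) (auto simp: dg_def)

lemma sum_if_if:
  fixes i j n :: nat and A :: "'a::field" and B :: "nat \<Rightarrow> 'a"
  assumes "i < n"
  shows "(\<Sum>k\<in>{0..<n}. (if i = k then A else 0) * (if k = j then B k else 0)) = (if i = j then A * B i else 0)"
proof -
  have "(\<Sum>k\<in>{0..<n}. (if i = k then A else 0) * (if k = j then B k else 0)) = (\<Sum>k\<in>{0..<n}. if k = i then (if i = j then A * B i else 0) else 0)"
    by (rule sum.cong) auto
  also have "\<dots> = (if i = j then A * B i else 0)" using \<open>i < n\<close> by simp
  finally show ?thesis .
qed

lemma dg_mult: "dg n g * dg n h = dg n (\<lambda>i. g i * h i)"
  by (rule eq_matI) (auto simp: dg_def scalar_prod_def sum_if_if)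

lemma dg_smult_one: "c \<cdot>\<^sub>m 1\<^sub>m n = dg n (\<lambda>_. c)"
  by (rule eq_matI) (auto simp: dg_def)

lemma dg_zero: "0\<^sub>m n n = dg n (\<lambda>_. 0)"
  by (rule eq_matI) (auto simp: dg_def)

lemma dg_eqD: "dg n g = dg n h \<Longrightarrow> i < n \<Longrightarrow> g i = h i"
  by (drule arg_cong[where f="\<lambda>M. M $$ (i,i)"]) (simp add: dg_def)

lemma dg_cong: "(\<And>m. m < n \<Longrightarrow> g m = h m) \<Longrightarrow> dg n g = dg n h"
  by (rule eq_matI) (auto simp: dg_def)

lemma em_diag: "dg n (\<lambda>m. if m = i then 1 else 0) = em n i i"
  by (rule eq_matI) (auto simp: dg_def em_def)

lemma sum_if_if2:
  fixes i j k a b n :: nat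
  assumes "j < n"
  shows "(\<Sum>c\<in>{0..<n}. (if a = i \<and> c = j then 1 else 0) * (if c = j \<and> b = k then 1 else 0)) = (if a = i \<and> b = k then 1 else (0::'a::field))"
proof -
  have "(\<Sum>c\<in>{0..<n}. (if a = i \<and> c = j then 1 else 0) * (if c = j \<and> b = k then 1 else 0)) = (\<Sum>c\<in>{0..<n}. if c = j then (if a = i \<and> b = k then 1 else (0::'a)) else 0)"
    by (rule sum.cong) auto
  also have "\<dots> = (if a = i \<and> b = k then 1 else 0)" using \<open>j < n\<close> by simp
  finally show ?thesis .
qed

lemma em_mult: "j < n \<Longrightarrow> em n i j * em n j k = em n i k"
  by (rule eq_matI) (auto simp: em_def scalar_prod_def sum_if_if2)

locale chsetup = kalg \<phi> for \<phi> :: "'k::field_char_0 \<Rightarrow> 'r::ring_1" +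
  fixes tr :: "'r \<Rightarrow> 'k" and n :: nat and f :: "'r \<Rightarrow> 'k mat" and u :: 'r
  assumes ch: "cayley_hamilton \<phi> tr n"
    and fcar: "\<And>x. f x \<in> carrier_mat n n"
    and fadd: "\<And>x y. f (x + y) = f x + f y"
    and fmul: "\<And>x y. f (x * y) = f x * f y"
    and fphi: "\<And>c. f (\<phi> c) = c \<cdot>\<^sub>m 1\<^sub>m n"
    and fsurj: "\<And>A. A \<in> carrier_mat n n \<Longrightarrow> \<exists>x. f x = A"
    and fu: "f u = dg n (\<lambda>m. of_nat (Suc m))"
begin

definition aa :: "nat \<Rightarrow> 'k" where "aa m = of_nat (Suc m)"
abbreviation D where "D \<equiv> dg n (\<lambda>m. aa m)"

lemma fu': "f u = D" using fu by (simp add: aa_def)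

lemma aa_inj[simp]: "aa i = aa j \<longleftrightarrow> i = j" by (simp add: aa_def)

lemma npos: "n > 0"
proof (rule ccontr)
  assume "\<not> n > 0"
  then have "n = 0" by simp
  with ch have "char_poly_eval \<phi> tr 0 0 = 0" unfolding cayley_hamilton_def by blast
  then show False by (simp add: char_poly_eval_def)
qed

lemma f0: "f 0 = 0\<^sub>m n n"
  using fphi[of 0] by (simp add: dg_smult_one dg_zero)

lemma f_ev: "f b = D \<Longrightarrow> f (ev \<phi> p b) = dg n (\<lambda>m. poly p (aa m))"
proof (induction p)
  case 0 then show ?case by (simp add: f0 dg_zero)
next
  case (pCons a p)
  have "f (ev \<phi> (pCons a p) b) = dg n (\<lambda>_. a) + D * dg n (\<lambda>m. poly p (aa m))"
    using pCons by (simp add: ev_pCons fadd fmul fphi dg_smult_one)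
  then show ?case by (simp add: dg_mult dg_add)
qed

lemma f_diff: assumes "f a = f b" shows "f (a - b) = 0\<^sub>m n n"
proof -
  have eq: "f a = f (a - b) + f b" by (metis diff_add_cancel fadd)
  have c1: "f (a - b) \<in> carrier_mat n n" "f b \<in> carrier_mat n n" by (rule fcar)+
  show ?thesis
  proof (rule eq_matI)
    fix i j assume "i < dim_row (0\<^sub>m n n :: 'k mat)" "j < dim_col (0\<^sub>m n n :: 'k mat)"
    then have ij: "i < n" "j < n" by auto
    from arg_cong[OF eq[unfolded assms], of "\<lambda>M. M $$ (i,j)"] c1 ij
    show "f (a - b) $$ (i, j) = 0\<^sub>m n n $$ (i, j)" by simp
  qed (use c1 in auto)
qed

definition Qb :: "'r \<Rightarrow> 'k poly" where
  "Qb b = monom 1 n + (\<Sum>i\<in>{1..n}. monom ((-1) ^ i * newton_e (\<lambda>j. tr (b ^ j)) i) (n - i))"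

definition P :: "'k poly" where "P = (\<Prod>l<n. [:- aa l, 1:])"

lemma ev_Qb: "ev \<phi> (Qb b) b = 0"
proof -
  have "ev \<phi> (Qb b) b = char_poly_eval \<phi> tr n b"
    by (simp add: Qb_def char_poly_eval_def ev_add ev_sum ev_monom phi1)
  with ch show ?thesis unfolding cayley_hamilton_def by simp
qed

lemma degree_P: "degree P = n" and coeff_P: "coeff P n = 1"
proof -
  have "degree P = (\<Sum>l<n. degree [:- aa l, 1:])"
    unfolding P_def by (rule degree_prod_eq_sum_degree) auto
  then show dP: "degree P = n" by simp
  have "lead_coeff P = 1" unfolding P_def lead_coeff_prod by simp
  with dP show "coeff P n = 1" by simp
qed

lemma poly_P_root: "l < n \<Longrightarrow> poly P (aa l) = 0"
  unfolding P_def poly_prod by (rule prod_zero) auto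

lemma card_A: "card (aa ` {..<n}) = n"
  by (subst card_image) (auto simp: inj_on_def)

lemma root_P: assumes fb: "f b = D" shows "ev \<phi> P b = 0"
proof -
  have "Qb b = P"
  proof (rule poly_eqI_degree_lead_coeff[where n = n and A = "aa ` {..<n}"])
    have "coeff (Qb b) n = 1 + (\<Sum>i\<in>{1..n}. (if n - i = n then (-1) ^ i * newton_e (\<lambda>j. tr (b ^ j)) i else 0))"
      by (simp add: Qb_def coeff_sum coeff_monom)
    also have "(\<Sum>i\<in>{1..n}. (if n - i = n then (-1) ^ i * newton_e (\<lambda>j. tr (b ^ j)) i else 0)) = 0"
      by (rule sum.neutral) auto
    finally show "coeff (Qb b) n = coeff P n" by (simp add: coeff_P)
    show "n \<le> card (aa ` {..<n})" unfolding card_A by simp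
    show "degree (Qb b) \<le> n"
      unfolding Qb_def
      by (intro degree_add_le degree_sum_le) (auto intro: order.trans[OF degree_monom_le])
    show "degree P \<le> n" by (simp add: degree_P)
    fix z assume "z \<in> aa ` {..<n}"
    then obtain l where l: "l < n" "z = aa l" by auto
    have "dg n (\<lambda>m. poly (Qb b) (aa m)) = dg n (\<lambda>_. 0)"
      using f_ev[OF fb, of "Qb b"] by (simp add: ev_Qb f0 dg_zero)
    from dg_eqD[OF this l(1)] poly_P_root[OF l(1)] l show "poly (Qb b) z = poly P z" by simp
  qed
  then show ?thesis using ev_Qb[of b] by simp
qed

definition Lc :: "nat \<Rightarrow> 'k" where "Lc i = (\<Prod>l\<in>{..<n}-{i}. (aa i - aa l))"
definition Lp :: "nat \<Rightarrow> 'k poly" where "Lp i = (\<Prod>l\<in>{..<n}-{i}. [:- aa l, 1:])"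
definition L :: "nat \<Rightarrow> 'k poly" where "L i = Polynomial.smult (inverse (Lc i)) (Lp i)"
definition e :: "nat \<Rightarrow> 'r" where "e i = ev \<phi> (L i) u"

lemma Lc_nz: "Lc i \<noteq> 0"
  unfolding Lc_def by (subst prod_zero_iff) auto

lemma poly_Lp_self: "poly (Lp i) (aa i) = Lc i"
  unfolding Lp_def Lc_def poly_prod by simp

lemma poly_L: "j < n \<Longrightarrow> poly (L i) (aa j) = (if j = i then 1 else 0)"
proof (cases "j = i")
  case True then show ?thesis using Lc_nz[of i] poly_Lp_self[of i] by (simp add: L_def)
next
  case False
  assume j: "j < n"
  have "poly (Lp i) (aa j) = 0"
    unfolding Lp_def poly_prod by (rule prod_zero) (use j False in auto)
  then show ?thesis using False by (simp add: L_def)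
qed

lemma P_split: "i < n \<Longrightarrow> P = [:- aa i, 1:] * Lp i"
  unfolding P_def Lp_def by (rule prod.remove) auto

lemma e_comm: "e i * u = u * e i"
  unfolding e_def using ev_commute[of u u "L i"] by simp

lemma e_eig: assumes i: "i < n" shows "u * e i = \<phi> (aa i) * e i"
proof -
  have "(u - \<phi> (aa i)) * e i = ev \<phi> ([:- aa i, 1:] * L i) u"
    by (simp only: e_def ev_mult ev_lin)
  also have "[:- aa i, 1:] * L i = Polynomial.smult (inverse (Lc i)) P"
    unfolding L_def P_split[OF i] by (rule mult_smult_right)
  also have "ev \<phi> \<dots> u = 0"
    by (simp add: ev_smult root_P fu')
  finally show ?thesis by (simp add: left_diff_distrib)
qed

lemma e_idem: assumes i: "i < n" shows "e i * e i = e i"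
proof -
  have "e i * e i = \<phi> (poly (L i) (aa i)) * e i"
    unfolding e_def[of i, THEN arg_cong[where f="\<lambda>t. t * e i"]]
    by (rule ev_eigen) (rule e_eig[OF i])
  then show ?thesis using i poly_L[OF i, of i] by (simp add: phi1)
qed

lemma e_sum: "(\<Sum>i<n. e i) = 1"
proof -
  have "(\<Sum>i<n. L i) = 1"
  proof (rule poly_eqI_degree[where A = "aa ` {..<n}"])
    fix x assume "x \<in> aa ` {..<n}"
    then obtain j where j: "j < n" "x = aa j" by auto
    have "poly (\<Sum>i<n. L i) x = (\<Sum>i<n. if j = i then 1 else 0)"
      unfolding poly_sum using j by (simp add: poly_L)
    also have "\<dots> = 1" using j by simp
    finally show "poly (\<Sum>i<n. L i) x = poly 1 x" by simp
  next
    have "degree (\<Sum>i<n. L i) \<le> n - 1"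
    proof (rule degree_sum_le)
      fix i assume "i \<in> {..<n}"
      have "degree (L i) \<le> degree (Lp i)" by (simp add: L_def degree_smult_le)
      also have "\<dots> \<le> (\<Sum>l\<in>{..<n}-{i}. degree [:- aa l, 1:])"
        unfolding Lp_def using degree_prod_sum_le[of "{..<n}-{i}" "\<lambda>l. [:- aa l, 1:]"]
        by (simp add: o_def)
      also have "\<dots> \<le> n - 1" using \<open>i \<in> {..<n}\<close> by simp
      finally show "degree (L i) \<le> n - 1" .
    qed simp
    then show "degree (\<Sum>i<n. L i) < card (aa ` {..<n})" unfolding card_A using npos by simp
  next
    show "degree (1::'k poly) < card (aa ` {..<n})" unfolding card_A using npos by simp
  qed
  then have "ev \<phi> (\<Sum>i<n. L i) u = 1" by simp
  then show ?thesis by (simp add: ev_sum e_def)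
qed

lemma f_e: "i < n \<Longrightarrow> f (e i) = em n i i"
  unfolding e_def f_ev[OF fu'] em_diag[symmetric]
  by (rule dg_cong) (simp add: poly_L)

lemma fzero_mult: "f z = 0\<^sub>m n n \<Longrightarrow> f (a * z * b) = 0\<^sub>m n n"
  using fcar[of a] fcar[of b]
  by (simp add: fmul right_mult_zero_mat left_mult_zero_mat)

lemma phi_left: "y * (\<phi> c * w) = \<phi> c * (y * w)"
  by (metis mult.assoc phi_c)

lemma diag: assumes i: "i < n" and z: "f z = 0\<^sub>m n n" shows "e i * z * e i = 0"
proof -
  define x where "x = e i * z * e i"
  define a where "a = aa i"
  have fx: "f x = 0\<^sub>m n n" unfolding x_def by (rule fzero_mult[OF z])
  have ex: "e i * x = x" unfolding x_def by (metis e_idem[OF i] mult.assoc)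
  have xe: "x * e i = x" unfolding x_def by (metis e_idem[OF i] mult.assoc)
  have eu: "e i * u = \<phi> a * e i" using e_comm e_eig[OF i] a_def by simp
  have ux: "u * x = \<phi> a * x"
    unfolding x_def using e_eig[OF i] a_def by (metis mult.assoc)
  have xu: "x * u = \<phi> a * x"
  proof -
    have "x * u = x * (e i * u)" by (metis xe mult.assoc)
    also have "\<dots> = \<phi> a * (x * e i)" by (simp add: eu phi_left)
    finally show ?thesis by (simp add: xe)
  qed
  define v where "v = u + x"
  have fv: "f v = D" unfolding v_def by (simp add: fadd fx fu')
  have Pv: "ev \<phi> P v = 0" by (rule root_P[OF fv])
  define Q where "Q = Lp i"
  define q where "q = poly Q a"
  have qnz: "q \<noteq> 0" unfolding q_def Q_def a_def by (simp add: poly_Lp_self Lc_nz)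
  have "poly (Q - [:q:]) a = 0" by (simp add: q_def)
  then have "[:- a, 1:] dvd (Q - [:q:])" using poly_eq_0_iff_dvd by blast
  then obtain Q2 where Q2: "Q - [:q:] = [:- a, 1:] * Q2" by (elim dvdE)
  then have Q2': "Q = [:q:] + [:- a, 1:] * Q2" by (metis diff_add_cancel add.commute)
  define H where "H = ev \<phi> Q2 v"
  have evQ: "ev \<phi> Q v = \<phi> q + (v - \<phi> a) * H"
    by (subst Q2') (simp only: ev_add ev_const ev_mult ev_lin H_def)
  have e1: "e i * (v - \<phi> a) = x"
    by (simp add: v_def distrib_left right_diff_distrib eu ex phi_c[of a "e i"])
  have x1: "x * (v - \<phi> a) = x * x"
    by (simp add: v_def distrib_left right_diff_distrib xu phi_c[of a x])
  have "0 = e i * ev \<phi> P v" using Pv by simp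
  also have "\<dots> = e i * (v - \<phi> a) * ev \<phi> Q v"
    unfolding P_split[OF i] ev_mult ev_lin Q_def a_def by (simp only: mult.assoc)
  also have "\<dots> = x * (\<phi> q + (v - \<phi> a) * H)" by (simp add: e1 evQ)
  also have "\<dots> = \<phi> q * x + x * x * H"
    by (simp add: distrib_left phi_c[of q x] x1 mult.assoc[symmetric])
  finally have eq0: "\<phi> q * x + x * x * H = 0" by simp
  then have xxH: "x * x * H = - (\<phi> q * x)" by (simp add: eq_neg_iff_add_eq_0 add.commute)
  define h where "h = \<phi> (- inverse q) * H"
  have xh: "x * x * h = x"
  proof -
    have "x * x * h = \<phi> (- inverse q) * (x * x * H)"
      by (simp add: h_def phi_left mult.assoc)
    also have "\<dots> = \<phi> (inverse q) * \<phi> q * x"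
      by (subst xxH) (simp add: phi_minus mult.assoc)
    finally show ?thesis using phi_inv[OF qnz] by simp
  qed
  have xv: "x * v = v * x" by (simp add: v_def distrib_left distrib_right ux xu)
  have xH: "x * H = H * x" unfolding H_def by (rule ev_commute[OF xv])
  have xhc: "x * h = h * x"
    unfolding h_def phi_left xH by (simp only: mult.assoc)
  define e' where "e' = x * h"
  have e'2: "e' * e' = e'"
  proof -
    have "e' * e' = x * (h * x) * h" by (simp add: e'_def mult.assoc)
    also have "\<dots> = x * x * h * h" by (simp add: xhc[symmetric] mult.assoc)
    finally show ?thesis by (simp add: xh e'_def)
  qed
  have xe': "x * e' = x" using xh by (simp add: e'_def mult.assoc)
  have fe': "f e' = 0\<^sub>m n n" using fcar[of h] by (simp add: e'_def fmul fx left_mult_zero_mat)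
  have uv: "u * v = v * u" by (simp add: v_def distrib_left distrib_right ux xu)
  have uH: "u * H = H * u" unfolding H_def by (rule ev_commute[OF uv])
  have uh: "u * h = h * u"
    unfolding h_def phi_left uH by (simp only: mult.assoc)
  have ue': "u * e' = \<phi> a * e'"
    unfolding e'_def by (metis ux mult.assoc)
  define s where "s = (of_nat (Suc n) :: 'k)"
  define w where "w = u + \<phi> s * e'"
  have fw: "f w = D"
    using fcar[of "\<phi> s"] by (simp add: w_def fadd fmul fe' fu' right_mult_zero_mat)
  have Pw: "ev \<phi> P w = 0" by (rule root_P[OF fw])
  have we': "w * e' = \<phi> (a + s) * e'"
    by (simp add: w_def distrib_right ue' mult.assoc e'2 phi_add)
  have "\<phi> (poly P (a + s)) * e' = 0"
    using ev_eigen[OF we', of P] Pw by simp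
  moreover have "poly P (a + s) \<noteq> 0"
  proof -
    have "\<forall>l\<in>{..<n}. poly [:- aa l, 1:] (a + s) \<noteq> 0"
    proof
      fix l assume l: "l \<in> {..<n}"
      have ne: "(of_nat (Suc i + Suc n) :: 'k) \<noteq> of_nat (Suc l)"
        using l by (simp only: of_nat_eq_iff) auto
      have eq: "poly [:- aa l, 1:] (a + s) = of_nat (Suc i + Suc n) - of_nat (Suc l)"
        by (simp add: a_def s_def aa_def algebra_simps)
      show "poly [:- aa l, 1:] (a + s) \<noteq> 0" by (metis ne eq right_minus_eq)
    qed
    then show ?thesis unfolding P_def poly_prod by simp
  qed
  ultimately have "e' = 0" by (rule phi_cancel[rotated])
  then have "x = 0" using xe' by simp
  then show ?thesis by (simp add: x_def)
qed

lemma cross: assumes i: "i < n" and j: "j < n" and r: "f r = 0\<^sub>m n n"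
  shows "e i * r * e j = 0"
proof -
  obtain g0 where g0: "f g0 = em n i j" using fsurj[of "em n i j"] by auto
  obtain w0 where w0: "f w0 = em n j i" using fsurj[of "em n j i"] by auto
  define d where "d = e i - g0 * e j * w0"
  have "f (g0 * e j * w0) = f (e i)"
    by (simp add: fmul g0 w0 f_e i j em_mult)
  then have fd: "f d = 0\<^sub>m n n" unfolding d_def by (intro f_diff) simp
  have d0: "e i * d * e i = 0" by (rule diag[OF i fd])
  have eee: "e i * e i * e i = e i" by (simp add: e_idem[OF i])
  have "e i * e i * e i = e i * g0 * e j * w0 * e i"
    using d0 by (simp add: d_def right_diff_distrib left_diff_distrib mult.assoc)
  then have ei: "e i = e i * g0 * e j * w0 * e i" using eee by simp
  have fw: "f (w0 * e i * r) = 0\<^sub>m n n"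
    using fcar[of w0] fcar[of "e i"] by (simp add: fmul r right_mult_zero_mat)
  have "e i * r * e j = e i * g0 * (e j * (w0 * e i * r) * e j)"
    by (subst ei) (simp add: mult.assoc)
  also have "e j * (w0 * e i * r) * e j = 0" by (rule diag[OF j fw])
  finally show ?thesis by simp
qed

lemma kernel_zero: assumes r: "f r = 0\<^sub>m n n" shows "r = 0"
proof -
  have "r = (\<Sum>i<n. e i) * r * (\<Sum>j<n. e j)" by (simp add: e_sum)
  also have "\<dots> = 0" by (simp add: sum_distrib_left sum_distrib_right cross r)
  finally show ?thesis .
qed

end

theorem corollary3p4:
  fixes \<phi> :: "'k::field_char_0 \<Rightarrow> 'r::ring_1" and tr :: "'r \<Rightarrow> 'k" and n :: nat
  assumes "alg_closed TYPE('k)"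
    and "k_algebra \<phi>"
    and "finitely_generated \<phi>"
    and "cayley_hamilton \<phi> tr n"
    and "quotient_iso_Mn \<phi> n (jacobson_radical TYPE('r))"
  shows "jacobson_radical TYPE('r) = {0}"
proof -
  obtain f :: "'r \<Rightarrow> 'k mat" where
    fcar: "\<forall>x. f x \<in> carrier_mat n n" and fadd: "\<forall>x y. f (x + y) = f x + f y"
    and fmul: "\<forall>x y. f (x * y) = f x * f y" and fphi: "\<forall>c. f (\<phi> c) = c \<cdot>\<^sub>m 1\<^sub>m n"
    and fsurj: "f ` UNIV = carrier_mat n n"
    and J: "{x. f x = 0\<^sub>m n n} = jacobson_radical TYPE('r)"
    using assms(5) unfolding quotient_iso_Mn_def by blast
  have fs: "\<And>A. A \<in> carrier_mat n n \<Longrightarrow> \<exists>x. f x = A"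
    using fsurj by (metis imageE)
  obtain u where fu: "f u = dg n (\<lambda>m. of_nat (Suc m))" using fs[of "dg n (\<lambda>m. of_nat (Suc m))"] by auto
  interpret chsetup \<phi> tr n f u
  proof (unfold_locales)
    show "k_algebra \<phi>" by (rule assms(2))
    show "cayley_hamilton \<phi> tr n" by (rule assms(4))
    show "\<And>x. f x \<in> carrier_mat n n" using fcar by blast
    show "\<And>x y. f (x + y) = f x + f y" using fadd by blast
    show "\<And>x y. f (x * y) = f x * f y" using fmul by blast
    show "\<And>c. f (\<phi> c) = c \<cdot>\<^sub>m 1\<^sub>m n" using fphi by blast
    show "\<And>A. A \<in> carrier_mat n n \<Longrightarrow> \<exists>x. f x = A" by (rule fs)
    show "f u = dg n (\<lambda>m. of_nat (Suc m))" by (rule fu)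
  qed
  have "{x. f x = 0\<^sub>m n n} = {0}"
  proof
    show "{x. f x = 0\<^sub>m n n} \<subseteq> {0}" using kernel_zero by blast
    show "{0} \<subseteq> {x. f x = 0\<^sub>m n n}" using f0 by blast
  qed
  then show ?thesis using J by simp
qed

end
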